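(* Fix a context $x$, a finite response set $\mathcal Y(x)$, a distribution $\pi_{\mathrm{old}}(\cdot\mid x)$ on $\mathcal Y(x)$, a function $A(x,\cdot):\mathcal Y(x)\to\mathbb R$, and $\beta>0$. For $\tau>0$ define the Lambert mass function \[ M_A(\tau)=\mathbb E_{y\sim\pi_{\mathrm{old}}(\cdot\mid x)}\left[\frac{1}{\tau}W_0\!\left(\tau\exp\!\left(\frac{A(x,y)}{\beta}\right)\right)\right]. \] Suppose $\tau_s>0$ satisfies $M_A(\tau_s)=1$. If $\mathbb E_{y\sim\pi_{\mathrm{old}}(\cdot\mid x)}[A(x,y)]\ge\beta$, then $\tau_s\ge1$. Consequently: (i) for any rewards $r_1,\dots,r_G\in\mathbb R$ ($G\ge 1$) with $\bar r=\frac1G\sum_j r_j$, the advantages $\widehat A_i=r_i-\bar r+\beta$ satisfy $\frac1G\sum_{i=1}^G W_0(\exp(\widehat A_i/\beta))\ge1$, so that any $\widehat\tau>0$ with $\frac1G\sum_{i=1}^G\frac{1}{\widehat\tau}W_0(\widehat\tau\exp(\widehat A_i/\beta))=1$ satisfies $\widehat\tau\ge1$; and (ii) if $r:\mathcal Y(x)\to\mathbb R$ is a reward, $V_{\mathrm{old}}(x)=\mathbb E_{y\sim\pi_{\mathrm{old}}}[r(y)]$, and $A_G(x,y)=\frac{G-1}{G}(r(y)-V_{\mathrm{old}}(x))+\beta$ (which equals $\mathbb E[r_i-\bar r+\beta\mid y_i=y]$ when $y_1,\dots,y_G$ are i.i.d. from $\pi_{\mathrm{old}}(\cdot\mid x)$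 and $r_j=r(y_j)$), then any $\tau_s>0$ with $M_{A_G}(\tau_s)=1$ satisfies $\tau_s\ge1$.
   Context: $W_0$ denotes the principal branch of the Lambert $W$ function, i.e. the inverse of $w\mapsto we^w$ on $[-1,\infty)$, satisfying $W_0(z)e^{W_0(z)}=z$. $\tau_s$ is called the Lambert normalization multiplier; the Lambert target is $\pi^\star(y\mid x)=\frac{\pi_{\mathrm{old}}(y\mid x)}{\tau_s}W_0(\tau_s e^{A(x,y)/\beta})$. *)

theory Defs
  imports Complex_Main
begin

text \<open>Principal branch of the Lambert W function: the inverse of w \<mapsto> w e^w on [-1,\<infinity>).
  (Only meaningful for z \<ge> -1/e; all arguments used below are positive.)\<close>
definition lambertW0 :: "real \<Rightarrow> real" where
  "lambertW0 z = (THE w. w \<ge> -1 \<and> w * exp w = z)"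

definition lambert_mass :: "'a set \<Rightarrow> ('a \<Rightarrow> real) \<Rightarrow> ('a \<Rightarrow> real) \<Rightarrow> real \<Rightarrow> real \<Rightarrow> real" where
  "lambert_mass Y p A \<beta> \<tau> = (\<Sum>y\<in>Y. p y * (lambertW0 (\<tau> * exp (A y / \<beta>)) / \<tau>))"

end

theory Submission
  imports Defs
begin

lemma pos_wexp_le: "(v::real) \<le> 0 \<Longrightarrow> v * exp v \<le> 0"
  by (simp add: mult_nonpos_nonneg)

lemma wexp_strict: "0 < (v::real) \<Longrightarrow> v < w \<Longrightarrow> v * exp v < w * exp w"
  by (intro mult_strict_mono) auto

lemma W_char:
  assumes z: "(z::real) > 0"
  shows "lambertW0 z > 0 \<and> lambertW0 z * exp (lambertW0 z) = z"
proof -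
  have "\<exists>w\<ge>0. w \<le> z \<and> w * exp w = z"
  proof (rule IVT)
    show "0 * exp 0 \<le> z" using z by simp
    have "exp z \<ge> 1" using z by simp
    then show "z \<le> z * exp z" using z
      by (metis mult.right_neutral mult_left_mono less_imp_le)
    show "0 \<le> z" using z by simp
    show "\<forall>x. 0 \<le> x \<and> x \<le> z \<longrightarrow> isCont (\<lambda>w. w * exp w) x"
      by (auto intro!: continuous_intros)
  qed
  then obtain w where w: "w \<ge> 0" "w * exp w = z" by blast
  have wpos: "w > 0" using w z by (cases "w = 0") auto
  have uniq: "v = w" if "v \<ge> -1 \<and> v * exp v = z" for v
  proof -
    have vpos: "v > 0"
    proof (rule ccontr)
      assume "\<not> v > 0"
      then have "v * exp v \<le> 0" by (intro pos_wexp_le) auto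
      with that z show False by auto
    qed
    show ?thesis
    proof (rule ccontr)
      assume "v \<noteq> w"
      then have "v < w \<or> w < v" by auto
      then show False
        using wexp_strict[OF vpos, of w] wexp_strict[OF wpos, of v] that w by auto
    qed
  qed
  have "lambertW0 z = w"
    unfolding lambertW0_def
  proof (rule the_equality)
    show "w \<ge> -1 \<and> w * exp w = z" using w by simp
  qed (rule uniq)
  then show ?thesis using wpos w by simp
qed

lemma W_ratio:
  assumes "(z::real) > 0"
  shows "lambertW0 z / z = exp (- lambertW0 z)"
proof -
  have "lambertW0 z * exp (lambertW0 z) = z" using W_char[OF assms] by simp
  then show ?thesis using assms by (auto simp: field_simps exp_minus)
qed

lemma W_strict_mono:
  assumes "0 < (z1::real)" "z1 < z2"
  shows "lambertW0 z1 < lambertW0 z2"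
proof (rule ccontr)
  assume "\<not> ?thesis"
  then have le: "lambertW0 z2 \<le> lambertW0 z1" by simp
  have z2: "z2 > 0" using assms by simp
  have "lambertW0 z2 * exp (lambertW0 z2) \<le> lambertW0 z1 * exp (lambertW0 z1)"
    using le W_char[OF z2] by (intro mult_mono) auto
  then show False using W_char[OF assms(1)] W_char[OF z2] assms by simp
qed

lemma W_tangent:
  "lambertW0 (exp a) \<ge> (1 + a) / 2"
proof -
  define w where "w = lambertW0 (exp a)"
  have w: "w > 0" "w * exp w = exp a" using W_char[of "exp a"] by (auto simp: w_def)
  have "ln (w * exp w) = a" using w by simp
  moreover have "ln (w * exp w) = ln w + ln (exp w)" using w(1) by (rule ln_mult_pos) simp
  ultimately have "ln w + w = a" using ln_exp[of w] by linarith
  moreover have "ln w \<le> w - 1" using w by (simp add: ln_le_minus_one)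
  ultimately show ?thesis unfolding w_def[symmetric] by simp
qed

lemma term_strict:
  assumes "0 < \<tau>" "\<tau> < 1"
  shows "lambertW0 (exp c) < lambertW0 (\<tau> * exp c) / \<tau>"
proof -
  have p: "0 < \<tau> * exp c" using assms by simp
  have "lambertW0 (\<tau> * exp c) < lambertW0 (exp c)"
    using assms by (intro W_strict_mono p) simp
  then have "exp (- lambertW0 (exp c)) < exp (- lambertW0 (\<tau> * exp c))" by simp
  then have "exp c * exp (- lambertW0 (exp c)) < exp c * exp (- lambertW0 (\<tau> * exp c))" by simp
  also have "exp c * exp (- lambertW0 (\<tau> * exp c)) = lambertW0 (\<tau> * exp c) / \<tau>"
    using W_ratio[OF p] assms by (simp add: field_simps)
  also have "exp c * exp (- lambertW0 (exp c)) = lambertW0 (exp c)"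
    using W_ratio[of "exp c"] by (simp add: field_simps)
  finally show ?thesis .
qed

lemma core:
  fixes Y :: "'a set" and p A :: "'a \<Rightarrow> real" and \<beta> :: real
  assumes fin: "finite Y"
    and nonneg: "\<forall>y\<in>Y. p y \<ge> 0"
    and prob: "(\<Sum>y\<in>Y. p y) = 1"
    and beta_pos: "\<beta> > 0"
    and mean: "(\<Sum>y\<in>Y. p y * A y) \<ge> \<beta>"
  shows "(\<Sum>y\<in>Y. p y * lambertW0 (exp (A y / \<beta>))) \<ge> 1"
    and "\<forall>\<tau>>0. lambert_mass Y p A \<beta> \<tau> = 1 \<longrightarrow> \<tau> \<ge> 1"
proof -
  have m1: "(\<Sum>y\<in>Y. p y * (A y / \<beta>)) \<ge> 1"
  proof -
    have "(\<Sum>y\<in>Y. p y * (A y / \<beta>)) = (\<Sum>y\<in>Y. p y * A y) / \<beta>"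
      by (simp add: sum_divide_distrib)
    then show ?thesis using mean beta_pos by simp
  qed
  have "(\<Sum>y\<in>Y. p y * lambertW0 (exp (A y / \<beta>))) \<ge> (\<Sum>y\<in>Y. p y * ((1 + A y / \<beta>) / 2))"
    using nonneg by (intro sum_mono mult_left_mono W_tangent) auto
  moreover have "(\<Sum>y\<in>Y. p y * ((1 + A y / \<beta>) / 2)) = ((\<Sum>y\<in>Y. p y) + (\<Sum>y\<in>Y. p y * (A y / \<beta>))) / 2"
  proof -
    have "(\<Sum>y\<in>Y. p y * ((1 + A y / \<beta>) / 2)) = (\<Sum>y\<in>Y. (p y + p y * (A y / \<beta>)) / 2)"
      by (rule sum.cong[OF refl]) (simp add: distrib_left)
    also have "\<dots> = ((\<Sum>y\<in>Y. p y) + (\<Sum>y\<in>Y. p y * (A y / \<beta>))) / 2"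
      by (simp only: sum_divide_distrib[symmetric] sum.distrib)
    finally show ?thesis .
  qed
  ultimately show M1: "(\<Sum>y\<in>Y. p y * lambertW0 (exp (A y / \<beta>))) \<ge> 1"
    using m1 prob by simp
  show "\<forall>\<tau>>0. lambert_mass Y p A \<beta> \<tau> = 1 \<longrightarrow> \<tau> \<ge> 1"
  proof (intro allI impI)
    fix \<tau> :: real assume t: "\<tau> > 0" and L: "lambert_mass Y p A \<beta> \<tau> = 1"
    show "\<tau> \<ge> 1"
    proof (rule ccontr)
      assume "\<not> \<tau> \<ge> 1"
      then have t1: "\<tau> < 1" by simp
      obtain y0 where y0: "y0 \<in> Y" "p y0 > 0"
      proof -
        have "\<exists>y\<in>Y. p y \<noteq> 0" using prob by (metis one_neq_zero sum.neutral)
        then show ?thesis using that nonneg by force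
      qed
      have "(\<Sum>y\<in>Y. p y * lambertW0 (exp (A y / \<beta>))) < lambert_mass Y p A \<beta> \<tau>"
        unfolding lambert_mass_def
      proof (rule sum_strict_mono_ex1[OF fin])
        show "\<forall>y\<in>Y. p y * lambertW0 (exp (A y / \<beta>)) \<le> p y * (lambertW0 (\<tau> * exp (A y / \<beta>)) / \<tau>)"
        proof
          fix y assume "y \<in> Y"
          then show "p y * lambertW0 (exp (A y / \<beta>)) \<le> p y * (lambertW0 (\<tau> * exp (A y / \<beta>)) / \<tau>)"
            using nonneg term_strict[OF t t1, of "A y / \<beta>"] by (intro mult_left_mono) auto
        qed
        show "\<exists>y\<in>Y. p y * lambertW0 (exp (A y / \<beta>)) < p y * (lambertW0 (\<tau> * exp (A y / \<beta>)) / \<tau>)"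
        proof
          show "p y0 * lambertW0 (exp (A y0 / \<beta>)) < p y0 * (lambertW0 (\<tau> * exp (A y0 / \<beta>)) / \<tau>)"
            using y0(2) term_strict[OF t t1] by (rule mult_strict_left_mono[rotated])
        qed (rule y0(1))
      qed
      then show False using M1 L by simp
    qed
  qed
qed

theorem proposition2:
  fixes Y :: "'a set" and p A :: "'a \<Rightarrow> real" and \<beta> :: real
  assumes fin: "finite Y"
    and nonneg: "\<forall>y\<in>Y. p y \<ge> 0"
    and prob: "(\<Sum>y\<in>Y. p y) = 1"
    and beta_pos: "\<beta> > 0"
  shows
    "(\<forall>\<tau>s>0. lambert_mass Y p A \<beta> \<tau>s = 1 \<longrightarrow> (\<Sum>y\<in>Y. p y * A y) \<ge> \<beta> \<longrightarrow> \<tau>s \<ge> 1)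
   \<and> (\<forall>(G::nat) (r::nat \<Rightarrow> real). G \<ge> 1 \<longrightarrow>
        (let rbar = (\<Sum>j=1..G. r j) / real G;
             Ahat = (\<lambda>i. r i - rbar + \<beta>)
         in (\<Sum>i=1..G. lambertW0 (exp (Ahat i / \<beta>))) / real G \<ge> 1
          \<and> (\<forall>\<tau>>0. (\<Sum>i=1..G. lambertW0 (\<tau> * exp (Ahat i / \<beta>)) / \<tau>) / real G = 1
                  \<longrightarrow> \<tau> \<ge> 1)))
   \<and> (\<forall>(G::nat) (r::'a \<Rightarrow> real). G \<ge> 1 \<longrightarrow>
        (let V = (\<Sum>y\<in>Y. p y * r y);
             AG = (\<lambda>y. (real G - 1) / real G * (r y - V) + \<beta>)
         in \<forall>\<tau>s>0. lambert_mass Y p AG \<beta> \<tau>s = 1 \<longrightarrow> \<tau>s \<ge> 1))"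
proof (intro conjI allI impI)
  fix \<tau>s :: real
  assume "\<tau>s > 0" "lambert_mass Y p A \<beta> \<tau>s = 1" "(\<Sum>y\<in>Y. p y * A y) \<ge> \<beta>"
  then show "\<tau>s \<ge> 1" using core(2)[OF fin nonneg prob beta_pos] by blast
next
  fix G :: nat and r :: "nat \<Rightarrow> real"
  assume G: "G \<ge> 1"
  define rbar where "rbar = (\<Sum>j=1..G. r j) / real G"
  define Ahat where "Ahat = (\<lambda>i. r i - rbar + \<beta>)"
  define q where "q = (\<lambda>i::nat. 1 / real G)"
  have Gp: "real G > 0" using G by simp
  have qn: "\<forall>i\<in>{1..G}. q i \<ge> 0" by (simp add: q_def)
  have qs: "(\<Sum>i\<in>{1..G}. q i) = 1" using Gp by (simp add: q_def)
  have "(\<Sum>i\<in>{1..G}. q i * Ahat i) = (\<Sum>i\<in>{1..G}. r i - rbar + \<beta>) / real G"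
    by (simp add: q_def Ahat_def sum_divide_distrib)
  also have "(\<Sum>i\<in>{1..G}. r i - rbar + \<beta>) = (\<Sum>i\<in>{1..G}. r i) - real G * rbar + real G * \<beta>"
    by (simp add: sum.distrib sum_subtractf)
  also have "real G * rbar = (\<Sum>i\<in>{1..G}. r i)" using Gp by (simp add: rbar_def)
  finally have mean: "(\<Sum>i\<in>{1..G}. q i * Ahat i) = \<beta>" using Gp by simp
  note c = core[OF finite_atLeastAtMost qn qs beta_pos mean[symmetric, THEN eq_refl]]
  have e1: "(\<Sum>i\<in>{1..G}. q i * lambertW0 (exp (Ahat i / \<beta>))) = (\<Sum>i=1..G. lambertW0 (exp (Ahat i / \<beta>))) / real G"
    by (simp add: q_def sum_divide_distrib)
  have e2: "lambert_mass {1..G} q Ahat \<beta> \<tau> = (\<Sum>i=1..G. lambertW0 (\<tau> * exp (Ahat i / \<beta>)) / \<tau>) / real G" for \<tau>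
    unfolding q_def lambert_mass_def sum_divide_distrib by (intro sum.cong refl) (simp add: divide_divide_eq_left)
  show "let rbar = (\<Sum>j=1..G. r j) / real G;
             Ahat = (\<lambda>i. r i - rbar + \<beta>)
         in (\<Sum>i=1..G. lambertW0 (exp (Ahat i / \<beta>))) / real G \<ge> 1
          \<and> (\<forall>\<tau>>0. (\<Sum>i=1..G. lambertW0 (\<tau> * exp (Ahat i / \<beta>)) / \<tau>) / real G = 1
                  \<longrightarrow> \<tau> \<ge> 1)"
    using c e1 e2 unfolding Let_def rbar_def[symmetric] by (simp only: Ahat_def)
next
  fix G :: nat and r :: "'a \<Rightarrow> real"
  assume G: "G \<ge> 1"
  define V where "V = (\<Sum>y\<in>Y. p y * r y)"
  define AG where "AG = (\<lambda>y. (real G - 1) / real G * (r y - V) + \<beta>)"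
  define k where "k = (real G - 1) / real G"
  have "(\<Sum>y\<in>Y. p y * AG y) = k * ((\<Sum>y\<in>Y. p y * r y) - V * (\<Sum>y\<in>Y. p y)) + \<beta> * (\<Sum>y\<in>Y. p y)"
    by (simp add: AG_def k_def[symmetric] algebra_simps sum.distrib sum_distrib_left sum_subtractf)
  then have mean: "(\<Sum>y\<in>Y. p y * AG y) = \<beta>" using prob by (simp add: V_def)
  show "let V = (\<Sum>y\<in>Y. p y * r y);
             AG = (\<lambda>y. (real G - 1) / real G * (r y - V) + \<beta>)
         in \<forall>\<tau>s>0. lambert_mass Y p AG \<beta> \<tau>s = 1 \<longrightarrow> \<tau>s \<ge> 1"
    unfolding Let_def V_def[symmetric] AG_def[symmetric]
    using core(2)[OF fin nonneg prob beta_pos, of AG] mean by simp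
qed

end
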